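(* Let $U$ be an infinite uniquely $2$-divisible group, $\nu$ an involutory almost regular automorphism of $U$, $G=U\rtimes\langle\nu\rangle$, and let $A$ be an infinite abelian subgroup of $U$ which is inverted by $\nu$ and maximal (with respect to inclusion) among abelian subgroups of $U$ inverted by $\nu$. For $u\in U$ let $A_u$ be the subgroup of $A$ consisting of the elements inverted by the involution $u\nu u^{-1}\in G$. Then $|A:A_u|<\infty$ for every $u\in U$.
   Context: An automorphism $\nu$ is involutory if $\nu\ne\mathrm{id}$ and $\nu^2=\mathrm{id}$, and almost regular if $C_U(\nu)$ is finite. A group is uniquely $2$-divisible if every element has a unique square root. $G$ is the semidirect product of $U$ by $\langle\nu\rangle$, with $U,\nu$ identified with their images in $G$. A subgroup is inverted by an element $t$ if $t^{-1}xt=x^{-1}$ for all its elements $x$. (Such a maximal infinite $A$ exists by Zorn's lemma and the existence of an infinite abelian subgroup inverted by $\nu$.) *)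

theory Defs
  imports "HOL-Algebra.Algebra"
begin

text \<open>Semidirect product U \<rtimes> <nu> with nu an involutory automorphism.
Elements are pairs (u, s) standing for u * nu^s (s = True meaning nu^1).
Multiplication: (a, s)(b, t) = (a * nu^s(b), s xor t).\<close>
definition semidirect_inv :: "('a, 'b) monoid_scheme \<Rightarrow> ('a \<Rightarrow> 'a) \<Rightarrow> ('a \<times> bool) monoid" where
  "semidirect_inv U \<nu> =
     \<lparr> carrier = carrier U \<times> UNIV,
       monoid.mult = (\<lambda>(a, s) (b, t). (a \<otimes>\<^bsub>U\<^esub> (if s then \<nu> b else b), s \<noteq> t)),
       monoid.one = (\<one>\<^bsub>U\<^esub>, False) \<rparr>"

definition emb_U :: "'a \<Rightarrow> 'a \<times> bool" where "emb_U u = (u, False)"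

definition emb_nu :: "('a, 'b) monoid_scheme \<Rightarrow> 'a \<times> bool" where "emb_nu U = (\<one>\<^bsub>U\<^esub>, True)"

definition inverted_by :: "('c, 'd) monoid_scheme \<Rightarrow> 'c \<Rightarrow> 'c set \<Rightarrow> bool" where
  "inverted_by G t S \<longleftrightarrow> (\<forall>x\<in>S. inv\<^bsub>G\<^esub> t \<otimes>\<^bsub>G\<^esub> x \<otimes>\<^bsub>G\<^esub> t = inv\<^bsub>G\<^esub> x)"

definition abelian_subgroup :: "'a set \<Rightarrow> ('a, 'b) monoid_scheme \<Rightarrow> bool" where
  "abelian_subgroup A U \<longleftrightarrow> subgroup A U \<and> (\<forall>x\<in>A. \<forall>y\<in>A. x \<otimes>\<^bsub>U\<^esub> y = y \<otimes>\<^bsub>U\<^esub> x)"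

definition uniquely_2_divisible :: "('a, 'b) monoid_scheme \<Rightarrow> bool" where
  "uniquely_2_divisible U \<longleftrightarrow> (\<forall>x\<in>carrier U. \<exists>!y. y \<in> carrier U \<and> y \<otimes>\<^bsub>U\<^esub> y = x)"

definition involutory_aut :: "('a, 'b) monoid_scheme \<Rightarrow> ('a \<Rightarrow> 'a) \<Rightarrow> bool" where
  "involutory_aut U \<nu> \<longleftrightarrow> \<nu> \<in> iso U U \<and> (\<exists>x\<in>carrier U. \<nu> x \<noteq> x) \<and> (\<forall>x\<in>carrier U. \<nu> (\<nu> x) = x)"

definition almost_regular :: "('a, 'b) monoid_scheme \<Rightarrow> ('a \<Rightarrow> 'a) \<Rightarrow> bool" where
  "almost_regular U \<nu> \<longleftrightarrow> finite {x \<in> carrier U. \<nu> x = x}"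

end

theory Submission
  imports Defs
begin


lemma sd_mult[simp]: "(a, s) \<otimes>\<^bsub>semidirect_inv U \<nu>\<^esub> (b, t) = (a \<otimes>\<^bsub>U\<^esub> (if s then \<nu> b else b), s \<noteq> t)"
  by (simp add: semidirect_inv_def)
lemma sd_one[simp]: "\<one>\<^bsub>semidirect_inv U \<nu>\<^esub> = (\<one>\<^bsub>U\<^esub>, False)"
  by (simp add: semidirect_inv_def)
lemma sd_carrier[simp]: "carrier (semidirect_inv U \<nu>) = carrier U \<times> UNIV"
  by (simp add: semidirect_inv_def)

lemma sd_group:
  fixes U :: "('a, 'b) monoid_scheme" (structure)
  assumes U: "group U" and h: "\<nu> \<in> hom U U" and inv2: "\<And>x. x\<in>carrier U \<Longrightarrow> \<nu> (\<nu> x) = x"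
  shows "group (semidirect_inv U \<nu>)"
proof -
  interpret group U by fact
  have hc: "\<And>x. x \<in> carrier U \<Longrightarrow> \<nu> x \<in> carrier U" using h by (auto simp: hom_def)
  have hm: "\<And>x y. x \<in> carrier U \<Longrightarrow> y \<in> carrier U \<Longrightarrow> \<nu> (x \<otimes> y) = \<nu> x \<otimes> \<nu> y"
    using h by (auto simp: hom_def)
  have h1: "\<nu> \<one> = \<one>" using hom_one[OF h U U] by simp
  show ?thesis
  proof (rule groupI)
    fix x y assume "x \<in> carrier (semidirect_inv U \<nu>)" "y \<in> carrier (semidirect_inv U \<nu>)"
    then show "x \<otimes>\<^bsub>semidirect_inv U \<nu>\<^esub> y \<in> carrier (semidirect_inv U \<nu>)"
      by (cases x; cases y) (auto simp: hc)
  next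
    show "\<one>\<^bsub>semidirect_inv U \<nu>\<^esub> \<in> carrier (semidirect_inv U \<nu>)" by simp
  next
    fix x y z assume "x \<in> carrier (semidirect_inv U \<nu>)" "y \<in> carrier (semidirect_inv U \<nu>)" "z \<in> carrier (semidirect_inv U \<nu>)"
    then show "x \<otimes>\<^bsub>semidirect_inv U \<nu>\<^esub> y \<otimes>\<^bsub>semidirect_inv U \<nu>\<^esub> z =
           x \<otimes>\<^bsub>semidirect_inv U \<nu>\<^esub> (y \<otimes>\<^bsub>semidirect_inv U \<nu>\<^esub> z)"
      by (cases x; cases y; cases z) (auto simp: hc hm inv2 m_assoc)
  next
    fix x assume "x \<in> carrier (semidirect_inv U \<nu>)"
    then show "\<one>\<^bsub>semidirect_inv U \<nu>\<^esub> \<otimes>\<^bsub>semidirect_inv U \<nu>\<^esub> x = x"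
      by (cases x) (auto simp: hc)
  next
    fix x assume "x \<in> carrier (semidirect_inv U \<nu>)"
    then obtain a s where x: "x = (a, s)" "a \<in> carrier U" by (cases x) auto
    show "\<exists>y\<in>carrier (semidirect_inv U \<nu>). y \<otimes>\<^bsub>semidirect_inv U \<nu>\<^esub> x = \<one>\<^bsub>semidirect_inv U \<nu>\<^esub>"
      apply (rule bexI[where x="(if s then \<nu> (inv a) else inv a, s)"])
      using x by (auto simp: hc hm[symmetric] h1)
  qed
qed

lemma sd_inv:
  fixes U :: "('a, 'b) monoid_scheme" (structure)
  assumes U: "group U" and h: "\<nu> \<in> hom U U" and inv2: "\<And>x. x\<in>carrier U \<Longrightarrow> \<nu> (\<nu> x) = x"
    and a: "a \<in> carrier U"
  shows "inv\<^bsub>semidirect_inv U \<nu>\<^esub> (a, s) = (if s then \<nu> (inv\<^bsub>U\<^esub> a) else inv\<^bsub>U\<^esub> a, s)"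
proof -
  interpret group U by fact
  interpret G: group "semidirect_inv U \<nu>" using sd_group[OF assms(1-3)] .
  have hc: "\<And>x. x \<in> carrier U \<Longrightarrow> \<nu> x \<in> carrier U" using h by (auto simp: hom_def)
  have hm: "\<And>x y. x \<in> carrier U \<Longrightarrow> y \<in> carrier U \<Longrightarrow> \<nu> (x \<otimes> y) = \<nu> x \<otimes> \<nu> y"
    using h by (auto simp: hom_def)
  have h1: "\<nu> \<one> = \<one>" using hom_one[OF h U U] by simp
  show ?thesis
    apply (rule G.inv_equality)
    using a by (auto simp: hc hm[symmetric] h1)
qed



lemma (in group) cancel1[simp]: "x \<in> carrier G \<Longrightarrow> z \<in> carrier G \<Longrightarrow> x \<otimes> (inv x \<otimes> z) = z"
  by (simp add: m_assoc[symmetric])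
lemma (in group) cancel2[simp]: "x \<in> carrier G \<Longrightarrow> z \<in> carrier G \<Longrightarrow> inv x \<otimes> (x \<otimes> z) = z"
  by (simp add: m_assoc[symmetric])
lemma (in group) swap3: "x \<in> carrier G \<Longrightarrow> y \<in> carrier G \<Longrightarrow> z \<in> carrier G \<Longrightarrow> x \<otimes> y = y \<otimes> x
   \<Longrightarrow> x \<otimes> (y \<otimes> z) = y \<otimes> (x \<otimes> z)"
  by (metis m_assoc)
lemma (in group) comm_inv: assumes "x \<in> carrier G" "y \<in> carrier G" "x \<otimes> inv y = inv y \<otimes> x"
  shows "y \<otimes> x = x \<otimes> y"
proof -
  have "y \<otimes> x = y \<otimes> (x \<otimes> inv y) \<otimes> y" using assms(1,2) by (simp add: m_assoc)
  also have "\<dots> = x \<otimes> y" using assms by (simp add: m_assoc)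
  finally show ?thesis .
qed

lemma main_count:
  fixes U :: "('a, 'b) monoid_scheme" (structure)
  assumes U: "group U" and h: "\<nu> \<in> hom U U" and inv2: "\<And>x. x\<in>carrier U \<Longrightarrow> \<nu> (\<nu> x) = x"
    and div2: "\<forall>x\<in>carrier U. \<exists>!r. r \<in> carrier U \<and> r \<otimes> r = x"
    and fin: "finite {x \<in> carrier U. \<nu> x = x}"
    and sg: "subgroup A U" and comm: "\<forall>x\<in>A. \<forall>y\<in>A. x \<otimes> y = y \<otimes> x"
    and invA: "\<And>a. a \<in> A \<Longrightarrow> \<nu> a = inv a"
    and y: "y \<in> carrier U" "\<nu> y = inv y"
  shows "finite ((\<lambda>x. {a\<in>A. y \<otimes> a = a \<otimes> y} #> x) ` A)"
proof -
  interpret group U by fact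
  interpret hom: group_hom U U \<nu> using h U by (simp add: group_hom_def group_hom_axioms_def)
  define H where "H = {a\<in>A. y \<otimes> a = a \<otimes> y}"
  have Ac: "\<And>a. a \<in> A \<Longrightarrow> a \<in> carrier U" using sg subgroup.subset by blast
  have hc: "\<And>x. x \<in> carrier U \<Longrightarrow> \<nu> x \<in> carrier U" by simp
  have hm: "\<And>x z. x \<in> carrier U \<Longrightarrow> z \<in> carrier U \<Longrightarrow> \<nu> (x \<otimes> z) = \<nu> x \<otimes> \<nu> z"
    by simp
  define sq where "sq x = (THE r. r \<in> carrier U \<and> r \<otimes> r = x)" for x
  have sq: "sq x \<in> carrier U \<and> sq x \<otimes> sq x = x" if "x \<in> carrier U" for x
    unfolding sq_def using theI'[OF div2[rule_format, OF that]] .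
  have squ: "sq x = r" if "x \<in> carrier U" "r \<in> carrier U" "r \<otimes> r = x" for x r
    unfolding sq_def using div2[rule_format, OF that(1)] that by (blast intro: the1_equality)
  define d where "d b = inv b \<otimes> sq (b \<otimes> (b \<otimes> inv y))" for b
  have K: "inv (sq (b \<otimes> (b \<otimes> inv y))) \<otimes> (inv (sq (b \<otimes> (b \<otimes> inv y))) \<otimes> (b \<otimes> b)) = y"
    if b: "b \<in> carrier U" for b
  proof -
    let ?r = "sq (b \<otimes> (b \<otimes> inv y))"
    have r: "?r \<in> carrier U" "?r \<otimes> ?r = b \<otimes> (b \<otimes> inv y)" using sq b y by auto
    have "inv ?r \<otimes> (inv ?r \<otimes> (b \<otimes> b)) = inv (?r \<otimes> ?r) \<otimes> (b \<otimes> b)"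
      using r(1) b by (simp add: inv_mult_group m_assoc)
    also have "\<dots> = y" using r b y by (simp add: inv_mult_group m_assoc)
    finally show ?thesis .
  qed
  have nur: "\<nu> (sq (b \<otimes> (b \<otimes> inv y))) = inv b \<otimes> (inv b \<otimes> (inv (sq (b \<otimes> (b \<otimes> inv y))) \<otimes> (b \<otimes> b)))"
    if b: "b \<in> A" for b
  proof -
    let ?r = "sq (b \<otimes> (b \<otimes> inv y))"
    have bc: "b \<in> carrier U" using Ac b .
    have r: "?r \<in> carrier U" "?r \<otimes> ?r = b \<otimes> (b \<otimes> inv y)" using sq bc y by auto
    let ?X = "\<nu> (b \<otimes> (b \<otimes> inv y))"
    have X: "?X = inv b \<otimes> (inv b \<otimes> y)" using bc y invA[OF b] by simp
    have "sq ?X = \<nu> ?r"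
      by (rule squ) (use r bc y in \<open>auto simp flip: hm\<close>)
    moreover have "sq ?X = inv b \<otimes> (inv b \<otimes> (inv ?r \<otimes> (b \<otimes> b)))"
    proof (rule squ)
      show "?X \<in> carrier U" using bc y by simp
      show "inv b \<otimes> (inv b \<otimes> (inv ?r \<otimes> (b \<otimes> b))) \<in> carrier U" using bc r by simp
      have "(inv b \<otimes> (inv b \<otimes> (inv ?r \<otimes> (b \<otimes> b)))) \<otimes> (inv b \<otimes> (inv b \<otimes> (inv ?r \<otimes> (b \<otimes> b))))
          = inv b \<otimes> (inv b \<otimes> (inv ?r \<otimes> (inv ?r \<otimes> (b \<otimes> b))))" using bc r by (simp add: m_assoc)
      also have "\<dots> = ?X" using K[OF bc] X by simp
      finally show "(inv b \<otimes> (inv b \<otimes> (inv ?r \<otimes> (b \<otimes> b)))) \<otimes> (inv b \<otimes> (inv b \<otimes> (inv ?r \<otimes> (b \<otimes> b)))) = ?X" .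
    qed
    ultimately show ?thesis by simp
  qed
  have dc: "d b \<in> carrier U" if "b \<in> A" for b
    using Ac[OF that] sq y unfolding d_def by simp
  have dfib: "inv (d b) \<otimes> \<nu> (d b) = y" if b: "b \<in> A" for b
  proof -
    let ?r = "sq (b \<otimes> (b \<otimes> inv y))"
    have bc: "b \<in> carrier U" using Ac b .
    have r: "?r \<in> carrier U" using sq bc y by auto
    have "inv (d b) \<otimes> \<nu> (d b) = inv ?r \<otimes> (b \<otimes> (b \<otimes> \<nu> ?r))"
      unfolding d_def using bc r invA[OF b] by (simp add: inv_mult_group m_assoc)
    also have "\<dots> = inv ?r \<otimes> (inv ?r \<otimes> (b \<otimes> b))"
      using nur[OF b] bc r by (simp add: m_assoc[symmetric])
    also have "\<dots> = y" using K[OF bc] .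
    finally show ?thesis .
  qed
  have E: "inv b \<otimes> (d b \<otimes> (b \<otimes> d b)) = inv y" if b: "b \<in> A" for b
  proof -
    let ?r = "sq (b \<otimes> (b \<otimes> inv y))"
    have bc: "b \<in> carrier U" using Ac b .
    have r: "?r \<in> carrier U" "?r \<otimes> ?r = b \<otimes> (b \<otimes> inv y)" using sq bc y by auto
    have "inv b \<otimes> (d b \<otimes> (b \<otimes> d b)) = inv b \<otimes> (inv b \<otimes> (?r \<otimes> ?r))"
      unfolding d_def using bc r(1) by (simp add: m_assoc)
    also have "\<dots> = inv y" using r bc y by simp
    finally show ?thesis .
  qed
  have dsame: "b' \<otimes> inv b \<in> H" if b: "b \<in> A" "b' \<in> A" "d b = d b'" for b b'
  proof -
    have bc: "b \<in> carrier U" "b' \<in> carrier U" using Ac b by auto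
    define e where "e = b' \<otimes> inv b"
    define dd where "dd = d b"
    have ddc: "dd \<in> carrier U" using dc b unfolding dd_def by auto
    have eA: "e \<in> A" unfolding e_def using sg b by (simp add: subgroup.m_closed subgroup.m_inv_closed)
    have ec: "e \<in> carrier U" using Ac eA .
    have E1: "inv b \<otimes> (dd \<otimes> (b \<otimes> dd)) = inv y" using E[OF b(1)] unfolding dd_def .
    have E2: "inv b' \<otimes> (dd \<otimes> (b' \<otimes> dd)) = inv y" using E[OF b(2)] b(3) unfolding dd_def by metis
    have E3: "inv b \<otimes> (dd \<otimes> b) = inv b' \<otimes> (dd \<otimes> b')"
    proof -
      have "inv b \<otimes> (dd \<otimes> b) = (inv b \<otimes> (dd \<otimes> (b \<otimes> dd))) \<otimes> inv dd" using bc ddc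
        by (simp add: m_assoc)
      also have "\<dots> = inv y \<otimes> inv dd" by (simp only: E1)
      finally have 1: "inv b \<otimes> (dd \<otimes> b) = inv y \<otimes> inv dd" .
      have "inv b' \<otimes> (dd \<otimes> b') = (inv b' \<otimes> (dd \<otimes> (b' \<otimes> dd))) \<otimes> inv dd" using bc ddc
        by (simp add: m_assoc)
      also have "\<dots> = inv y \<otimes> inv dd" by (simp only: E2)
      finally have 2: "inv b' \<otimes> (dd \<otimes> b') = inv y \<otimes> inv dd" .
      show ?thesis using 1 2 by simp
    qed
    have ed: "e \<otimes> dd = dd \<otimes> e"
    proof -
      have "e \<otimes> dd = b' \<otimes> (inv b \<otimes> (dd \<otimes> b)) \<otimes> inv b" unfolding e_def using bc ddc by (simp add: m_assoc)
      also have "\<dots> = b' \<otimes> (inv b' \<otimes> (dd \<otimes> b')) \<otimes> inv b" by (simp only: E3)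
      also have "\<dots> = dd \<otimes> e" unfolding e_def using bc ddc by (simp add: m_assoc)
      finally show ?thesis .
    qed
    have eb: "e \<otimes> b = b \<otimes> e" using comm eA b(1) by blast
    have ibA: "inv b \<in> A" using sg b(1) by (simp add: subgroup.m_inv_closed)
    have eib: "e \<otimes> inv b = inv b \<otimes> e" using comm eA ibA by blast
    have s0: "e \<otimes> (inv b \<otimes> (dd \<otimes> (b \<otimes> dd))) = inv b \<otimes> (e \<otimes> (dd \<otimes> (b \<otimes> dd)))"
      by (rule swap3) (use ec bc ddc eib in auto)
    have s1: "e \<otimes> (dd \<otimes> (b \<otimes> dd)) = dd \<otimes> (e \<otimes> (b \<otimes> dd))"
      by (rule swap3) (use ec bc ddc ed in auto)
    have s2: "e \<otimes> (b \<otimes> dd) = b \<otimes> (e \<otimes> dd)"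
      by (rule swap3) (use ec bc ddc eb in auto)
    have "e \<otimes> inv y = e \<otimes> (inv b \<otimes> (dd \<otimes> (b \<otimes> dd)))" by (simp only: E1)
    also have "\<dots> = inv b \<otimes> (dd \<otimes> (b \<otimes> (dd \<otimes> e)))"
      by (simp only: s0 s1 s2 ed)
    also have "\<dots> = (inv b \<otimes> (dd \<otimes> (b \<otimes> dd))) \<otimes> e" using ec bc ddc by (simp add: m_assoc)
    also have "\<dots> = inv y \<otimes> e" by (simp only: E1)
    finally have "e \<otimes> inv y = inv y \<otimes> e" .
    then have "y \<otimes> e = e \<otimes> y" using comm_inv ec y by blast
    then show ?thesis using eA unfolding H_def e_def by simp
  qed
  define F where "F = {z \<in> carrier U. inv z \<otimes> \<nu> z = y}"
  have finF: "finite F"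
  proof (cases "F = {}")
    case False
    then obtain z0 where z0: "z0 \<in> F" by blast
    have "F \<subseteq> (\<lambda>c. c \<otimes> z0) ` {x \<in> carrier U. \<nu> x = x}"
    proof
      fix z assume z: "z \<in> F"
      have zc: "z \<in> carrier U" "z0 \<in> carrier U" using z z0 unfolding F_def by auto
      have f1: "inv z \<otimes> \<nu> z = y" "inv z0 \<otimes> \<nu> z0 = y" using z z0 unfolding F_def by auto
      have "\<nu> z = z \<otimes> (inv z \<otimes> \<nu> z)" using zc by simp
      then have nz1: "\<nu> z = z \<otimes> y" by (simp only: f1)
      have "\<nu> z0 = z0 \<otimes> (inv z0 \<otimes> \<nu> z0)" using zc by simp
      then have nz2: "\<nu> z0 = z0 \<otimes> y" by (simp only: f1)
      have "\<nu> (z \<otimes> inv z0) = \<nu> z \<otimes> inv (\<nu> z0)" using zc by simp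
      also have "\<dots> = z \<otimes> y \<otimes> inv (z0 \<otimes> y)" by (simp only: nz1 nz2)
      also have "\<dots> = z \<otimes> inv z0" using zc y by (simp add: inv_mult_group m_assoc)
      finally have "\<nu> (z \<otimes> inv z0) = z \<otimes> inv z0" .
      moreover have "z = (z \<otimes> inv z0) \<otimes> z0" using zc by (simp add: m_assoc)
      moreover have "z \<otimes> inv z0 \<in> carrier U" using zc by simp
      ultimately show "z \<in> (\<lambda>c. c \<otimes> z0) ` {x \<in> carrier U. \<nu> x = x}" by blast
    qed
    moreover have "finite ((\<lambda>c. c \<otimes> z0) ` {x \<in> carrier U. \<nu> x = x})" using fin by simp
    ultimately show ?thesis using finite_subset by blast
  qed simp
  have dA: "d ` A \<subseteq> F" using dc dfib F_def by auto
  define rep where "rep c = (SOME b. b \<in> A \<and> d b = c)" for c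
  have "(\<lambda>x. H #> x) ` A \<subseteq> (\<lambda>c. H #> rep c) ` (d ` A)"
  proof
    fix Y0 assume "Y0 \<in> (\<lambda>x. H #> x) ` A"
    then obtain x where x: "x \<in> A" "Y0 = H #> x" by blast
    have rb: "rep (d x) \<in> A \<and> d (rep (d x)) = d x" unfolding rep_def
      by (rule someI[of _ x]) (use x in auto)
    let ?b = "rep (d x)"
    have e: "x \<otimes> inv ?b \<in> H" using dsame[of ?b x] rb x by auto
    have bc: "?b \<in> carrier U" "x \<in> carrier U" using rb x Ac by auto
    have Hs: "subgroup H U"
    proof -
      have "H = A \<inter> {a \<in> carrier U. y \<otimes> a = a \<otimes> y}" unfolding H_def using Ac by auto
      moreover have "subgroup {a \<in> carrier U. y \<otimes> a = a \<otimes> y} U"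
      proof (rule subgroupI)
        show "{a \<in> carrier U. y \<otimes> a = a \<otimes> y} \<subseteq> carrier U" by auto
        show "{a \<in> carrier U. y \<otimes> a = a \<otimes> y} \<noteq> {}" using y by auto
        fix a assume a: "a \<in> {a \<in> carrier U. y \<otimes> a = a \<otimes> y}"
        then show "inv a \<in> {a \<in> carrier U. y \<otimes> a = a \<otimes> y}" using y
          by (auto simp: inv_solve_left inv_solve_right m_assoc)
             (metis inv_solve_left inv_solve_right m_assoc inv_closed m_closed)
      next
        fix a c assume "a \<in> {a \<in> carrier U. y \<otimes> a = a \<otimes> y}" "c \<in> {a \<in> carrier U. y \<otimes> a = a \<otimes> y}"
        then show "a \<otimes> c \<in> {a \<in> carrier U. y \<otimes> a = a \<otimes> y}" using y
          by (auto simp: m_assoc[symmetric]) (metis m_assoc)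
      qed
      ultimately show ?thesis using sg subgroups_Inter_pair by auto
    qed
    have HC: "H \<subseteq> carrier U" using Hs subgroup.subset by blast
    have ec: "x \<otimes> inv ?b \<in> carrier U" using bc by simp
    have "H #> x = H #> ((x \<otimes> inv ?b) \<otimes> ?b)" using bc by (simp add: m_assoc)
    also have "\<dots> = (H #> (x \<otimes> inv ?b)) #> ?b" using coset_mult_assoc HC ec bc by simp
    also have "\<dots> = H #> ?b" using coset_join2[OF ec Hs e] by simp
    finally show "Y0 \<in> (\<lambda>c. H #> rep c) ` (d ` A)" using x by blast
  qed
  moreover have "finite ((\<lambda>c. H #> rep c) ` (d ` A))" using finF dA finite_subset by blast
  ultimately show ?thesis unfolding H_def using finite_subset by blast
qed



lemma (in group) conj_inv_iff:
  assumes "a \<in> carrier G" "y \<in> carrier G"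
  shows "y \<otimes> inv a \<otimes> inv y = inv a \<longleftrightarrow> y \<otimes> a = a \<otimes> y"
proof -
  have "y \<otimes> inv a \<otimes> inv y = inv a \<longleftrightarrow> y \<otimes> inv a = inv a \<otimes> y"
  proof
    assume h: "y \<otimes> inv a \<otimes> inv y = inv a"
    have "y \<otimes> inv a = (y \<otimes> inv a \<otimes> inv y) \<otimes> y" using assms by (simp add: m_assoc)
    then show "y \<otimes> inv a = inv a \<otimes> y" by (simp only: h)
  next
    assume h: "y \<otimes> inv a = inv a \<otimes> y"
    have "y \<otimes> inv a \<otimes> inv y = inv a \<otimes> y \<otimes> inv y" by (simp only: h)
    then show "y \<otimes> inv a \<otimes> inv y = inv a" using assms by (simp add: m_assoc)
  qed
  also have "\<dots> \<longleftrightarrow> y \<otimes> a = a \<otimes> y"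
  proof
    assume "y \<otimes> inv a = inv a \<otimes> y" then show "y \<otimes> a = a \<otimes> y"
      using comm_inv[of y a] assms by simp
  next
    assume "y \<otimes> a = a \<otimes> y" then show "y \<otimes> inv a = inv a \<otimes> y"
      using comm_inv[of y "inv a"] assms by simp
  qed
  finally show ?thesis .
qed

theorem proposition3p5:
  fixes U :: "('a, 'b) monoid_scheme" and \<nu> :: "'a \<Rightarrow> 'a" and A :: "'a set"
  defines "G \<equiv> semidirect_inv U \<nu>"
  assumes "group U"
    and "infinite (carrier U)"
    and "uniquely_2_divisible U"
    and "involutory_aut U \<nu>"
    and "almost_regular U \<nu>"
    and "abelian_subgroup A U"
    and "infinite A"
    and "inverted_by G (emb_nu U) (emb_U ` A)"
    and "\<forall>B. abelian_subgroup B U \<and> inverted_by G (emb_nu U) (emb_U ` B) \<and> A \<subseteq> B \<longrightarrow> B = A"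
    and "u \<in> carrier U"
  shows "finite (rcosets\<^bsub>U\<lparr>carrier := A\<rparr>\<^esub>
           {a \<in> A. inverted_by G (emb_U u \<otimes>\<^bsub>G\<^esub> emb_nu U \<otimes>\<^bsub>G\<^esub> emb_U (inv\<^bsub>U\<^esub> u)) {emb_U a}})"
proof -
  interpret group U by fact
  have h: "\<nu> \<in> hom U U" using assms(5) by (simp add: involutory_aut_def iso_def)
  interpret hom: group_hom U U \<nu> using h assms(2) by (simp add: group_hom_def group_hom_axioms_def)
  have inv2: "\<And>x. x\<in>carrier U \<Longrightarrow> \<nu> (\<nu> x) = x" using assms(5) by (simp add: involutory_aut_def)
  have div2: "\<forall>x\<in>carrier U. \<exists>!r. r \<in> carrier U \<and> r \<otimes>\<^bsub>U\<^esub> r = x"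
    using assms(4) by (simp add: uniquely_2_divisible_def)
  have fin: "finite {x \<in> carrier U. \<nu> x = x}" using assms(6) by (simp add: almost_regular_def)
  have sg: "subgroup A U" and comm: "\<forall>x\<in>A. \<forall>y\<in>A. x \<otimes>\<^bsub>U\<^esub> y = y \<otimes>\<^bsub>U\<^esub> x"
    using assms(7) by (auto simp: abelian_subgroup_def)
  have Ac: "\<And>a. a \<in> A \<Longrightarrow> a \<in> carrier U" using sg subgroup.subset by blast
  have Ginv: "\<And>a s. a \<in> carrier U \<Longrightarrow> inv\<^bsub>G\<^esub> (a, s) = (if s then \<nu> (inv\<^bsub>U\<^esub> a) else inv\<^bsub>U\<^esub> a, s)"
    unfolding G_def using sd_inv[OF assms(2) h inv2] by blast
  have invA: "\<nu> a = inv\<^bsub>U\<^esub> a" if a: "a \<in> A" for a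
  proof -
    have ac: "a \<in> carrier U" using Ac a .
    have "inv\<^bsub>G\<^esub> (emb_nu U) \<otimes>\<^bsub>G\<^esub> emb_U a \<otimes>\<^bsub>G\<^esub> emb_nu U = inv\<^bsub>G\<^esub> (emb_U a)"
      using assms(9) a unfolding inverted_by_def by blast
    then show ?thesis using ac Ginv unfolding G_def emb_nu_def emb_U_def by simp
  qed
  define y where "y = u \<otimes>\<^bsub>U\<^esub> \<nu> (inv\<^bsub>U\<^esub> u)"
  have yc: "y \<in> carrier U" unfolding y_def using assms(11) by simp
  have ny: "\<nu> y = inv\<^bsub>U\<^esub> y" unfolding y_def using assms(11) inv2 by (simp add: inv_mult_group)
  have nyi: "\<nu> (inv\<^bsub>U\<^esub> y) = y" using ny yc by simp
  have elt: "emb_U u \<otimes>\<^bsub>G\<^esub> emb_nu U \<otimes>\<^bsub>G\<^esub> emb_U (inv\<^bsub>U\<^esub> u) = (y, True)"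
    unfolding G_def emb_nu_def emb_U_def y_def using assms(11) by simp
  have seteq: "{a \<in> A. inverted_by G (emb_U u \<otimes>\<^bsub>G\<^esub> emb_nu U \<otimes>\<^bsub>G\<^esub> emb_U (inv\<^bsub>U\<^esub> u)) {emb_U a}}
      = {a \<in> A. y \<otimes>\<^bsub>U\<^esub> a = a \<otimes>\<^bsub>U\<^esub> y}"
  proof -
    have "inverted_by G (y, True) {emb_U a} \<longleftrightarrow> y \<otimes>\<^bsub>U\<^esub> a = a \<otimes>\<^bsub>U\<^esub> y" if a: "a \<in> A" for a
    proof -
      have ac: "a \<in> carrier U" using Ac a .
      have "inverted_by G (y, True) {emb_U a} \<longleftrightarrow> y \<otimes>\<^bsub>U\<^esub> inv\<^bsub>U\<^esub> a \<otimes>\<^bsub>U\<^esub> inv\<^bsub>U\<^esub> y = inv\<^bsub>U\<^esub> a"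
        unfolding inverted_by_def emb_U_def using ac yc Ginv nyi invA[OF a] ny
        by (simp add: G_def)
      also have "\<dots> \<longleftrightarrow> y \<otimes>\<^bsub>U\<^esub> a = a \<otimes>\<^bsub>U\<^esub> y" using conj_inv_iff ac yc by blast
      finally show ?thesis .
    qed
    then show ?thesis unfolding elt by auto
  qed
  have eq: "rcosets\<^bsub>U\<lparr>carrier := A\<rparr>\<^esub> {a \<in> A. y \<otimes>\<^bsub>U\<^esub> a = a \<otimes>\<^bsub>U\<^esub> y} = (\<lambda>x. {a\<in>A. y \<otimes>\<^bsub>U\<^esub> a = a \<otimes>\<^bsub>U\<^esub> y} #>\<^bsub>U\<^esub> x) ` A"
    unfolding RCOSETS_def r_coset_def by auto
  show ?thesis unfolding seteq eq
    by (rule main_count[OF assms(2) h inv2 div2 fin sg comm invA yc ny])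
qed


end
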